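(* Use the convention that the flow of a Hamiltonian $H$ is $\dot F=\{H,F\}$. (i) On $\mathcal C^\times_{n,d,q}$, for $k\ge1$, the flow of $H=\frac1k\operatorname{tr}Z^k$ starting at $(X,Z,V_\alpha,W_\alpha)$ is $X(t)=Xe^{-tZ^k}$, $Z(t)=Z$, $V_\alpha(t)=V_\alpha$, $W_\alpha(t)=W_\alpha$. (ii) On $\mathcal C_{n,d,q}$, for $k\geq1$, the flow of $H=\frac1k\operatorname{tr}Y^k$ starting at $(X,Y,V_\alpha,W_\alpha)$ is $X(\tau)=Xe^{-\tau Y^k}+Y^{-1}(e^{-\tau Y^k}-\mathrm{Id}_n)$, $Y(\tau)=Y$, $V_\alpha(\tau)=V_\alpha$, $W_\alpha(\tau)=W_\alpha$, where $Y^{-1}(e^{-\tau Y^k}-\mathrm{Id}_n)$ denotes the entire power series in $Y$ (defined also for singular $Y$). These flows are complete on the respective Calogero–Moser spaces.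
   Context: Fix $n,d\ge1$, $q\in\mathbb C^\times$ not a root of unity; $o(\alpha,\beta)=0,1,-1$ according as $\alpha=\beta,\alpha<\beta,\alpha>\beta$. $\mathcal M^\times_{n,d,q}$: tuples $(X,Z,V_\alpha,W_\alpha)_{\alpha=1}^d$, $X,Z\in\mathrm{GL}_n$, $V_\alpha\in\mathrm{Mat}_{1\times n}$, $W_\alpha\in\mathrm{Mat}_{n\times1}$, $\mathrm{Id}_n+W_\alpha V_\alpha$ invertible, $XZX^{-1}Z^{-1}(\mathrm{Id}_n+W_1V_1)^{-1}\cdots(\mathrm{Id}_n+W_dV_d)^{-1}=q\mathrm{Id}_n$. $\mathcal M_{n,d,q}$: tuples $(X,Y,V_\alpha,W_\alpha)$ with $X,Y\in\mathrm{Mat}_{n\times n}$, $\mathrm{Id}_n+XY$, $\mathrm{Id}_n+YX$, $\mathrm{Id}_n+W_\alpha V_\alpha$ invertible and $(\mathrm{Id}_n+XY)(\mathrm{Id}_n+YX)^{-1}(\mathrm{Id}_n+W_1V_1)^{-1}\cdots(\mathrm{Id}_n+W_dV_d)^{-1}=q\mathrm{Id}_n$. $\mathrm{GL}_n$ acts on both by conjugating $X,Y,Z$, $V\mapsto Vg^{-1}$, $W\mapsto gW$; the quotients $\mathcal C^\times_{n,d,q}=\mathcal M^\times_{n,d,q}/\!/\mathrm{GL}_n$, $\mathcal C_{n,d,q}=\mathcal M_{n,d,q}/\!/\mathrm{GL}_n$ are smooth of dimension $2nd$ and carry the Poisson brackets induced on invariant functions by the quasi-Poisson biderivations given by $\{X_{ij},X_{kl}\}=\tfrac12(\delta_{il}(X^2)_{kj}-\delta_{kj}(X^2)_{il})$;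 for $U\in\{Y,Z\}$: $\{U_{ij},U_{kl}\}=\tfrac12(\delta_{kj}(U^2)_{il}-\delta_{il}(U^2)_{kj})$; $\{X_{ij},Z_{kl}\}=\tfrac12((ZX)_{kj}\delta_{il}+\delta_{kj}(XZ)_{il}+Z_{kj}X_{il}-X_{kj}Z_{il})$; $\{X_{ij},Y_{kl}\}=\delta_{kj}\delta_{il}+\tfrac12((YX)_{kj}\delta_{il}+\delta_{kj}(XY)_{il}+Y_{kj}X_{il}-X_{kj}Y_{il})$; for $U\in\{X,Y,Z\}$: $\{U_{ij},W_{\alpha,k}\}=\tfrac12(\delta_{kj}(UW_\alpha)_i-U_{kj}W_{\alpha,i})$, $\{U_{ij},V_{\alpha,l}\}=\tfrac12((V_\alpha U)_j\delta_{il}-V_{\alpha,j}U_{il})$; $\{V_{\alpha,j},V_{\beta,l}\}=\tfrac12o(\beta,\alpha)(V_{\beta,j}V_{\alpha,l}+V_{\alpha,j}V_{\beta,l})$; $\{W_{\alpha,i},W_{\beta,k}\}=\tfrac12o(\beta,\alpha)(W_{\beta,k}W_{\alpha,i}+W_{\alpha,k}W_{\beta,i})$; $\{V_{\alpha,j},W_{\beta,k}\}=\delta_{\alpha\beta}(\delta_{kj}+\tfrac12W_{\alpha,k}V_{\alpha,j}+\tfrac12\delta_{kj}V_\alpha W_\alpha)+\tfrac12o(\alpha,\beta)(\delta_{kj}V_\alpha W_\beta+W_{\beta,k}V_{\alpha,j})$. The flow of a $\mathrm{GL}_n$-invariant $H$ is described on representatives $(X,Z,V,W)$ (resp. $(X,Y,V,W)$)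 by $\dot M_{ij}=\{H,M_{ij}\}$ for each matrix entry. *)

theory Defs
  imports "HOL-Analysis.Analysis"
begin

text \<open>Matrices are complex^'n^'n (n = CARD('n)); the framing vectors are indexed by
  alpha in {0..<d} (the paper's alpha = 1..d shifted by one). V alpha is a row vector,
  W alpha a column vector, both stored as complex^'n.\<close>

definition kd :: "'a \<Rightarrow> 'a \<Rightarrow> complex" where
  "kd a b = (if a = b then 1 else 0)"

definition ord_sign :: "nat \<Rightarrow> nat \<Rightarrow> complex" where
  "ord_sign a b = (if a = b then 0 else if a < b then 1 else -1)"

definition smul :: "complex \<Rightarrow> complex^'n^'m \<Rightarrow> complex^'n^'m" where
  "smul c A = (\<chi> i j. c * A$i$j)"

primrec mpow :: "complex^'n^'n \<Rightarrow> nat \<Rightarrow> complex^'n^'n" where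
  "mpow A 0 = mat 1"
| "mpow A (Suc m) = A ** mpow A m"

definition mexp :: "complex^'n^'n \<Rightarrow> complex^'n^'n" where
  "mexp A = (\<Sum>m. smul (1 / fact m) (mpow A m))"

text \<open>The entire power series  Y^{-1}(exp(-tau Y^k) - Id) = sum_{m>=1} (-tau)^m Y^{km-1} / m!.\<close>
definition phiser :: "nat \<Rightarrow> complex \<Rightarrow> complex^'n^'n \<Rightarrow> complex^'n^'n" where
  "phiser k \<tau> Y = (\<Sum>m. smul ((- \<tau>) ^ Suc m / fact (Suc m)) (mpow Y (k * Suc m - 1)))"

definition outer :: "complex^'n \<Rightarrow> complex^'n \<Rightarrow> complex^'n^'n" where
  "outer W V = (\<chi> i j. W$i * V$j)"

definition rdot :: "complex^'n \<Rightarrow> complex^'n \<Rightarrow> complex" where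
  "rdot V W = (\<Sum>j\<in>UNIV. V$j * W$j)"

text \<open>(Id + W_1 V_1)^{-1} ... (Id + W_d V_d)^{-1}, in this order.\<close>
definition prodinv :: "nat \<Rightarrow> (nat \<Rightarrow> complex^'n) \<Rightarrow> (nat \<Rightarrow> complex^'n) \<Rightarrow> complex^'n^'n" where
  "prodinv d W V = foldr (\<lambda>\<alpha> P. matrix_inv (mat 1 + outer (W \<alpha>) (V \<alpha>)) ** P) [0..<d] (mat 1)"

type_synonym 'n cstate =
  "(complex^'n^'n) \<times> (complex^'n^'n) \<times> (nat \<Rightarrow> complex^'n) \<times> (nat \<Rightarrow> complex^'n)"

definition MX :: "nat \<Rightarrow> complex \<Rightarrow> 'n::finite cstate set" where
  "MX d q = {(X, Z, V, W). invertible X \<and> invertible Z \<and>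
      (\<forall>\<alpha><d. invertible (mat 1 + outer (W \<alpha>) (V \<alpha>))) \<and>
      X ** Z ** matrix_inv X ** matrix_inv Z ** prodinv d W V = mat q}"

definition MY :: "nat \<Rightarrow> complex \<Rightarrow> 'n::finite cstate set" where
  "MY d q = {(X, Y, V, W). invertible (mat 1 + X ** Y) \<and> invertible (mat 1 + Y ** X) \<and>
      (\<forall>\<alpha><d. invertible (mat 1 + outer (W \<alpha>) (V \<alpha>))) \<and>
      (mat 1 + X ** Y) ** matrix_inv (mat 1 + Y ** X) ** prodinv d W V = mat q}"

text \<open>Coordinate functions: entries of X, of the second matrix U (U = Z or U = Y),
  of V_alpha and of W_alpha.\<close>
datatype 'n coord = CX 'n 'n | CU 'n 'n | CV nat 'n | CW nat 'n

fun cval :: "'n::finite cstate \<Rightarrow> 'n coord \<Rightarrow> complex" where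
  "cval (X, U, V, W) (CX i j) = X$i$j"
| "cval (X, U, V, W) (CU i j) = U$i$j"
| "cval (X, U, V, W) (CV a j) = V a $ j"
| "cval (X, U, V, W) (CW a i) = W a $ i"

definition valid_coord :: "nat \<Rightarrow> 'n coord \<Rightarrow> bool" where
  "valid_coord d c = (case c of CV a j \<Rightarrow> a < d | CW a i \<Rightarrow> a < d | _ \<Rightarrow> True)"

definition brMW :: "complex^'n^'n \<Rightarrow> 'n \<Rightarrow> 'n \<Rightarrow> complex^'n \<Rightarrow> 'n \<Rightarrow> complex" where
  "brMW M i j w k = (1/2) * (kd k j * (M *v w)$i - M$k$j * w$i)"

definition brMV :: "complex^'n^'n \<Rightarrow> 'n \<Rightarrow> 'n \<Rightarrow> complex^'n \<Rightarrow> 'n \<Rightarrow> complex" where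
  "brMV M i j v l = (1/2) * ((v v* M)$j * kd i l - v$j * M$i$l)"

text \<open>{X_ij, U_kl}; the parameter c0 is 0 for U = Z and 1 for U = Y.\<close>
definition brXU :: "complex \<Rightarrow> complex^'n^'n \<Rightarrow> complex^'n^'n \<Rightarrow> 'n \<Rightarrow> 'n \<Rightarrow> 'n \<Rightarrow> 'n \<Rightarrow> complex" where
  "brXU c0 X U i j k l = c0 * kd k j * kd i l +
     (1/2) * ((U ** X)$k$j * kd i l + kd k j * (X ** U)$i$l + U$k$j * X$i$l - X$k$j * U$i$l)"

text \<open>The quasi-Poisson bracket on coordinate functions (as listed in the paper,
  extended by antisymmetry).\<close>
fun qbr :: "complex \<Rightarrow> 'n::finite cstate \<Rightarrow> 'n coord \<Rightarrow> 'n coord \<Rightarrow> complex" where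
  "qbr c0 (X, U, V, W) (CX i j) (CX k l) =
     (1/2) * (kd i l * (X ** X)$k$j - kd k j * (X ** X)$i$l)"
| "qbr c0 (X, U, V, W) (CU i j) (CU k l) =
     (1/2) * (kd k j * (U ** U)$i$l - kd i l * (U ** U)$k$j)"
| "qbr c0 (X, U, V, W) (CX i j) (CU k l) = brXU c0 X U i j k l"
| "qbr c0 (X, U, V, W) (CU k l) (CX i j) = - brXU c0 X U i j k l"
| "qbr c0 (X, U, V, W) (CX i j) (CW a k) = brMW X i j (W a) k"
| "qbr c0 (X, U, V, W) (CW a k) (CX i j) = - brMW X i j (W a) k"
| "qbr c0 (X, U, V, W) (CU i j) (CW a k) = brMW U i j (W a) k"
| "qbr c0 (X, U, V, W) (CW a k) (CU i j) = - brMW U i j (W a) k"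
| "qbr c0 (X, U, V, W) (CX i j) (CV a l) = brMV X i j (V a) l"
| "qbr c0 (X, U, V, W) (CV a l) (CX i j) = - brMV X i j (V a) l"
| "qbr c0 (X, U, V, W) (CU i j) (CV a l) = brMV U i j (V a) l"
| "qbr c0 (X, U, V, W) (CV a l) (CU i j) = - brMV U i j (V a) l"
| "qbr c0 (X, U, V, W) (CV a j) (CV b l) =
     (1/2) * ord_sign b a * (V b $ j * V a $ l + V a $ j * V b $ l)"
| "qbr c0 (X, U, V, W) (CW a i) (CW b k) =
     (1/2) * ord_sign b a * (W b $ k * W a $ i + W a $ k * W b $ i)"
| "qbr c0 (X, U, V, W) (CV a j) (CW b k) =
     kd a b * (kd k j + (1/2) * W a $ k * V a $ j + (1/2) * kd k j * rdot (V a) (W a))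
     + (1/2) * ord_sign a b * (kd k j * rdot (V a) (W b) + W b $ k * V a $ j)"
| "qbr c0 (X, U, V, W) (CW b k) (CV a j) =
     - (kd a b * (kd k j + (1/2) * W a $ k * V a $ j + (1/2) * kd k j * rdot (V a) (W a))
     + (1/2) * ord_sign a b * (kd k j * rdot (V a) (W b) + W b $ k * V a $ j))"

text \<open>Hamiltonian derivative {H, F} for H = (1/k) tr U^k, obtained from the
  biderivation property: {H, F} = sum_{a,b} dH/dU_ab {U_ab, F}, with
  dH/dU_ab = (U^{k-1})_ba.\<close>
definition ham_trpow :: "complex \<Rightarrow> nat \<Rightarrow> 'n::finite cstate \<Rightarrow> 'n coord \<Rightarrow> complex" where
  "ham_trpow c0 k st c =
     (case st of (X, U, V, W) \<Rightarrow>
        \<Sum>a\<in>UNIV. \<Sum>b\<in>UNIV. (mpow U (k - 1))$b$a * qbr c0 st (CU a b) c)"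

end

theory Submission
  imports Defs
begin


lemma smul_nth[simp]: "smul c A $ i $ j = c * A $ i $ j"
  by (simp add: smul_def)

lemma mpow_comm: "mpow A m ** A = A ** mpow A m"
  by (induction m) (simp_all add: matrix_mul_lid matrix_mul_rid flip: matrix_mul_assoc)

lemma mpow_add: "mpow A (m + n) = mpow A m ** mpow A n"
  by (induction m) (simp_all add: matrix_mul_lid matrix_mul_assoc)

lemma mpow_mult: "mpow (mpow A k) m = mpow A (k * m)"
  by (induction m) (simp_all add: mpow_add)

lemma comm_mpow: assumes "A ** C = C ** A" shows "A ** mpow C m = mpow C m ** A"
proof (induction m)
  case 0 then show ?case by (simp add: matrix_mul_lid matrix_mul_rid)
next
  case (Suc m)
  have "A ** mpow C (Suc m) = (A ** C) ** mpow C m" by (simp add: matrix_mul_assoc)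
  also have "\<dots> = C ** (A ** mpow C m)" by (simp add: assms matrix_mul_assoc)
  also have "\<dots> = mpow C (Suc m) ** A" by (simp add: Suc matrix_mul_assoc)
  finally show ?case .
qed

lemma smul_mult: "smul c A ** smul e B = smul (c * e) (A ** B)"
  by (simp add: vec_eq_iff matrix_matrix_mult_def sum_distrib_left mult_ac)

lemma mpow_smul: "mpow (smul c A) m = smul (c ^ m) (mpow A m)"
  by (induction m) (simp_all add: smul_mult, simp add: smul_def mat_def vec_eq_iff)

lemma mat_sums:
  fixes f :: "nat \<Rightarrow> 'a::real_normed_vector^'n^'m"
  assumes "\<And>i j. (\<lambda>m. f m $ i $ j) sums s i j"
  shows "f sums (\<chi> i j. s i j)"
proof -
  have e: "(\<lambda>n. sum f {..<n}) = (\<lambda>n. \<chi> i j. \<Sum>m<n. f m $ i $ j)"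
    by (rule ext) (simp add: vec_eq_iff sum_component)
  show ?thesis unfolding sums_def e
    by (intro tendsto_vec_lambda) (use assms in \<open>simp add: sums_def\<close>)
qed

lemma mat_suminf_nth:
  fixes f :: "nat \<Rightarrow> 'a::real_normed_vector^'n^'m"
  assumes "\<And>i j. summable (\<lambda>m. f m $ i $ j)"
  shows "(suminf f) $ i $ j = (\<Sum>m. f m $ i $ j)"
proof -
  have "f sums (\<chi> i j. \<Sum>m. f m $ i $ j)"
    by (rule mat_sums) (use assms in \<open>simp add: summable_sums\<close>)
  then show ?thesis by (simp add: sums_unique[symmetric])
qed

lemma mpow_bound:
  fixes C :: "complex^'n::finite^'n"
  defines "R \<equiv> (\<Sum>a\<in>UNIV. \<Sum>b\<in>UNIV. norm (C $ a $ b))"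
  shows "norm (mpow C m $ i $ j) \<le> R ^ m"
proof (induction m arbitrary: i j)
  case 0 then show ?case by (simp add: mat_def)
next
  case (Suc m)
  have "norm (mpow C (Suc m) $ i $ j) = norm (\<Sum>l\<in>UNIV. C $ i $ l * mpow C m $ l $ j)"
    by (simp add: matrix_matrix_mult_def)
  also have "\<dots> \<le> (\<Sum>l\<in>UNIV. norm (C $ i $ l) * R ^ m)"
    by (rule order_trans[OF norm_sum], rule sum_mono)
       (simp add: norm_mult mult_left_mono Suc)
  also have "\<dots> = (\<Sum>l\<in>UNIV. norm (C $ i $ l)) * R ^ m" by (simp add: sum_distrib_right)
  also have "\<dots> \<le> R * R ^ m"
  proof (rule mult_right_mono)
    show "(\<Sum>l\<in>UNIV. norm (C $ i $ l)) \<le> R" unfolding R_def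
      by (rule member_le_sum[where f="\<lambda>a. \<Sum>b\<in>UNIV. norm (C $ a $ b)"]) (auto intro: sum_nonneg)
    show "0 \<le> R ^ m" unfolding R_def by (intro zero_le_power sum_nonneg) auto
  qed
  finally show ?case by simp
qed

lemma ps_summable:
  fixes a :: "nat \<Rightarrow> complex"
  assumes "\<And>m. norm (a m) \<le> B * R ^ m" 
  shows "summable (\<lambda>m. a m * t ^ m / fact m)"
proof (rule summable_comparison_test')
  show "summable (\<lambda>m. B * (inverse (fact m) * (R * norm t) ^ m))"
    by (intro summable_mult summable_exp)
  fix m :: nat
  have "norm (a m * t ^ m / fact m) = norm (a m) * norm t ^ m / fact m"
    by (simp add: norm_mult norm_divide norm_power)
  also have "\<dots> \<le> B * R ^ m * norm t ^ m / fact m"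
    by (intro divide_right_mono mult_right_mono assms) auto
  also have "\<dots> = B * (inverse (fact m) * (R * norm t) ^ m)"
    by (simp add: power_mult_distrib field_simps)
  finally show "norm (a m * t ^ m / fact m) \<le> B * (inverse (fact m) * (R * norm t) ^ m)" .
qed

lemma ps_deriv:
  fixes a :: "nat \<Rightarrow> complex"
  assumes "\<And>m. norm (a m) \<le> B * R ^ m" 
  shows "((\<lambda>t. \<Sum>m. a m * t ^ m / fact m) has_field_derivative (\<Sum>m. a (Suc m) * t ^ m / fact m)) (at t)"
proof -
  define c where "c m = a m / fact m" for m
  have "((\<lambda>x. \<Sum>n. c n * x^n) has_field_derivative (\<Sum>n. diffs c n * t^n)) (at t)"
    by (rule termdiffs_strong_converges_everywhere)
       (use ps_summable[OF assms] in \<open>simp add: c_def field_simps\<close>)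
  moreover have "(\<lambda>x. \<Sum>n. c n * x^n) = (\<lambda>t. \<Sum>m. a m * t ^ m / fact m)"
    by (simp add: c_def field_simps)
  moreover have "(\<lambda>n. diffs c n * t^n) = (\<lambda>m. a (Suc m) * t ^ m / fact m)"
  proof (rule ext)
    fix n
    have nz: "(of_nat (Suc n) :: complex) \<noteq> 0" by (simp del: of_nat_Suc)
    have "diffs c n = of_nat (Suc n) * (a (Suc n) / (of_nat (Suc n) * fact n))"
      by (simp only: diffs_def c_def fact_Suc)
    also have "\<dots> = a (Suc n) / fact n" using nz by (simp del: of_nat_Suc)
    finally show "diffs c n * t^n = a (Suc n) * t ^ n / fact n" by simp
  qed
  ultimately show ?thesis by simp
qed



lemma mpow_bound1:
  fixes C :: "complex^'n::finite^'n"
  shows "\<exists>R. \<forall>m. norm (mpow C m $ i $ j) \<le> 1 * R ^ m"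
  using mpow_bound[of C] by auto

lemma mexp_summ: "summable (\<lambda>m. mpow (C::complex^'n::finite^'n) m $ i $ j * s ^ m / fact m)"
proof -
  obtain R where R: "\<forall>m. norm (mpow C m $ i $ j) \<le> 1 * R ^ m" using mpow_bound1 by blast
  show ?thesis by (rule ps_summable[of _ 1 R]) (use R in auto)
qed

lemma mexp_nth: "mexp (smul s (C::complex^'n::finite^'n)) $ i $ j = (\<Sum>m. mpow C m $ i $ j * s ^ m / fact m)"
proof -
  have e: "\<And>m i j. smul (1 / fact m) (mpow (smul s C) m) $ i $ j = mpow C m $ i $ j * s ^ m / fact m"
    by (simp add: mpow_smul)
  show ?thesis unfolding mexp_def
    by (subst mat_suminf_nth) (simp_all only: e mexp_summ)
qed

lemma mexp_lmul: "(A ** mexp (smul s (C::complex^'n::finite^'n))) $ i $ j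
   = (\<Sum>m. (A ** mpow C m) $ i $ j * s ^ m / fact m)"
proof -
  have "(A ** mexp (smul s C)) $ i $ j = (\<Sum>l\<in>UNIV. A $ i $ l * (\<Sum>m. mpow C m $ l $ j * s ^ m / fact m))"
    by (simp add: matrix_matrix_mult_def mexp_nth)
  also have "\<dots> = (\<Sum>l\<in>UNIV. \<Sum>m. A $ i $ l * (mpow C m $ l $ j * s ^ m / fact m))"
    by (intro sum.cong refl suminf_mult[symmetric] mexp_summ)
  also have "\<dots> = (\<Sum>m. \<Sum>l\<in>UNIV. A $ i $ l * (mpow C m $ l $ j * s ^ m / fact m))"
    by (rule suminf_sum[symmetric]) (intro summable_mult mexp_summ)
  also have "\<dots> = (\<Sum>m. (A ** mpow C m) $ i $ j * s ^ m / fact m)"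
    by (intro arg_cong[where f=suminf] ext)
       (simp add: matrix_matrix_mult_def sum_divide_distrib sum_distrib_right mult.assoc)
  finally show ?thesis .
qed

lemma mexp_rmul: "(mexp (smul s (C::complex^'n::finite^'n)) ** A) $ i $ j
   = (\<Sum>m. (mpow C m ** A) $ i $ j * s ^ m / fact m)"
proof -
  have "(mexp (smul s C) ** A) $ i $ j = (\<Sum>l\<in>UNIV. (\<Sum>m. mpow C m $ i $ l * s ^ m / fact m) * A $ l $ j)"
    by (simp add: matrix_matrix_mult_def mexp_nth)
  also have "\<dots> = (\<Sum>l\<in>UNIV. \<Sum>m. (mpow C m $ i $ l * s ^ m / fact m) * A $ l $ j)"
    by (intro sum.cong refl suminf_mult2 mexp_summ)
  also have "\<dots> = (\<Sum>m. \<Sum>l\<in>UNIV. (mpow C m $ i $ l * s ^ m / fact m) * A $ l $ j)"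
    by (rule suminf_sum[symmetric]) (intro summable_mult2 mexp_summ)
  also have "\<dots> = (\<Sum>m. (mpow C m ** A) $ i $ j * s ^ m / fact m)"
    by (intro arg_cong[where f=suminf] ext)
       (simp add: matrix_matrix_mult_def sum_divide_distrib sum_distrib_left mult_ac)
  finally show ?thesis .
qed

lemma mexp_deriv: "((\<lambda>s. mexp (smul s (C::complex^'n::finite^'n)) $ i $ j) has_field_derivative
     (C ** mexp (smul s C)) $ i $ j) (at s)"
proof -
  obtain R where R: "\<forall>m. norm (mpow C m $ i $ j) \<le> 1 * R ^ m" using mpow_bound1 by blast
  have "((\<lambda>s. \<Sum>m. mpow C m $ i $ j * s ^ m / fact m) has_field_derivative
      (\<Sum>m. mpow C (Suc m) $ i $ j * s ^ m / fact m)) (at s)"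
    by (rule ps_deriv[of _ 1 R]) (use R in auto)
  then show ?thesis by (simp add: mexp_nth[abs_def] mexp_lmul)
qed

lemma mexp_comm: assumes "A ** C = C ** (A::complex^'n::finite^'n)"
  shows "A ** mexp (smul s C) = mexp (smul s C) ** A"
  by (simp add: vec_eq_iff mexp_lmul mexp_rmul comm_mpow[OF assms])

lemma mexp_zero: "mexp (smul 0 (C::complex^'n::finite^'n)) = mat 1"
proof -
  have "\<And>i j. (\<lambda>m. mpow C m $ i $ j * 0 ^ m / fact m) = (\<lambda>m. if m = 0 then mat 1 $ i $ j else 0)"
    by (rule ext) simp
  moreover have "(\<Sum>m. if m = 0 then x else 0) = x" for x :: complex
    by (rule sums_unique[symmetric]) (rule sums_single[of 0 "\<lambda>_. x", simplified])
  ultimately show ?thesis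
    by (simp add: vec_eq_iff mexp_nth)
qed

lemma smul_neg_lmul: "smul (-1) C ** M = - (C ** M)"
  by (simp add: vec_eq_iff matrix_matrix_mult_def sum_negf)
lemma smul_neg_rmul: "M ** smul (-1) C = - (M ** C)"
  by (simp add: vec_eq_iff matrix_matrix_mult_def sum_negf)

lemma matrix_neg_lmul: "(- A) ** B = - (A ** (B::'a::comm_ring_1^'n^'n))"
  by (simp add: vec_eq_iff matrix_matrix_mult_def sum_negf)

lemma smul_neg_s: "smul (- s) C = smul s (smul (-1) C)"
  by (simp add: vec_eq_iff)

lemma mexp_inv: "mexp (smul s (C::complex^'n::finite^'n)) ** mexp (smul (- s) C) = mat 1"
proof -
  define C' where "C' = smul (-1) C"
  define G where "G i j s = (mexp (smul s C) ** mexp (smul s C')) $ i $ j" for i j s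
  have CC': "C' ** C = C ** C'" by (simp add: C'_def smul_neg_lmul smul_neg_rmul)
  have d: "(G i j has_field_derivative 0) (at x)" for i j x
  proof -
    have "(G i j has_field_derivative
       (\<Sum>l\<in>UNIV. (C ** mexp (smul x C)) $ i $ l * mexp (smul x C') $ l $ j
          + (C' ** mexp (smul x C')) $ l $ j * mexp (smul x C) $ i $ l)) (at x)"
    proof -
      have e: "G i j = (\<lambda>s. \<Sum>l\<in>UNIV. mexp (smul s C) $ i $ l * mexp (smul s C') $ l $ j)"
        by (rule ext) (simp add: G_def matrix_matrix_mult_def)
      show ?thesis unfolding e by (intro DERIV_sum DERIV_mult mexp_deriv)
    qed
    moreover have "(\<Sum>l\<in>UNIV. (C ** mexp (smul x C)) $ i $ l * mexp (smul x C') $ l $ j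
          + (C' ** mexp (smul x C')) $ l $ j * mexp (smul x C) $ i $ l)
        = ((C ** mexp (smul x C)) ** mexp (smul x C') + mexp (smul x C) ** (C' ** mexp (smul x C'))) $ i $ j"
      by (simp only: matrix_matrix_mult_def[of "_ ** _"] matrix_matrix_mult_def[of "mexp _"] vec_lambda_beta
           vector_add_component sum.distrib mult.commute)
    moreover have "(C ** mexp (smul x C)) ** mexp (smul x C') + mexp (smul x C) ** (C' ** mexp (smul x C')) = 0"
    proof -
      have "mexp (smul x C) ** (C' ** mexp (smul x C')) = (mexp (smul x C) ** C') ** mexp (smul x C')"
        by (simp add: matrix_mul_assoc)
      also have "\<dots> = (C' ** mexp (smul x C)) ** mexp (smul x C')"
        using mexp_comm[OF CC', of x] by simp
      also have "\<dots> = - ((C ** mexp (smul x C)) ** mexp (smul x C'))"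
      proof -
        have "C' ** mexp (smul x C) = - (C ** mexp (smul x C))"
          unfolding C'_def by (rule smul_neg_lmul)
        then show ?thesis by (simp only: matrix_neg_lmul)
      qed
      finally show ?thesis by simp
    qed
    ultimately show ?thesis by simp
  qed
  have "G i j s = G i j 0" for i j
    using has_field_derivative_zero_constant[of UNIV "G i j"] d by auto
  then have "mexp (smul s C) ** mexp (smul s C') = mat 1"
    by (simp add: G_def vec_eq_iff mexp_zero matrix_mul_lid)
  then show ?thesis by (subst smul_neg_s) (simp only: C'_def)
qed



lemma ser_nth:
  fixes P :: "nat \<Rightarrow> complex^'n::finite^'n"
  assumes "\<And>i j. summable (\<lambda>m. c m * P m $ i $ j)"
  shows "(\<Sum>m. smul (c m) (P m)) $ i $ j = (\<Sum>m. c m * P m $ i $ j)"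
  by (subst mat_suminf_nth) (simp_all add: assms)

lemma ser_rmul:
  fixes P :: "nat \<Rightarrow> complex^'n::finite^'n"
  assumes "\<And>i j. summable (\<lambda>m. c m * P m $ i $ j)"
  shows "((\<Sum>m. smul (c m) (P m)) ** A) $ i $ j = (\<Sum>m. c m * (P m ** A) $ i $ j)"
proof -
  have "((\<Sum>m. smul (c m) (P m)) ** A) $ i $ j = (\<Sum>l\<in>UNIV. (\<Sum>m. c m * P m $ i $ l) * A $ l $ j)"
    by (simp add: matrix_matrix_mult_def ser_nth assms)
  also have "\<dots> = (\<Sum>l\<in>UNIV. \<Sum>m. (c m * P m $ i $ l) * A $ l $ j)"
    by (intro sum.cong refl suminf_mult2 assms)
  also have "\<dots> = (\<Sum>m. \<Sum>l\<in>UNIV. (c m * P m $ i $ l) * A $ l $ j)"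
    by (rule suminf_sum[symmetric]) (intro summable_mult2 assms)
  also have "\<dots> = (\<Sum>m. c m * (P m ** A) $ i $ j)"
    by (intro arg_cong[where f=suminf] ext)
       (simp add: matrix_matrix_mult_def sum_distrib_left mult_ac)
  finally show ?thesis .
qed

lemma ser_lmul:
  fixes P :: "nat \<Rightarrow> complex^'n::finite^'n"
  assumes "\<And>i j. summable (\<lambda>m. c m * P m $ i $ j)"
  shows "(A ** (\<Sum>m. smul (c m) (P m))) $ i $ j = (\<Sum>m. c m * (A ** P m) $ i $ j)"
proof -
  have "(A ** (\<Sum>m. smul (c m) (P m))) $ i $ j = (\<Sum>l\<in>UNIV. A $ i $ l * (\<Sum>m. c m * P m $ l $ j))"
    by (simp add: matrix_matrix_mult_def ser_nth assms)
  also have "\<dots> = (\<Sum>l\<in>UNIV. \<Sum>m. A $ i $ l * (c m * P m $ l $ j))"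
    by (intro sum.cong refl suminf_mult[symmetric] assms)
  also have "\<dots> = (\<Sum>m. \<Sum>l\<in>UNIV. A $ i $ l * (c m * P m $ l $ j))"
    by (rule suminf_sum[symmetric]) (intro summable_mult assms)
  also have "\<dots> = (\<Sum>m. c m * (A ** P m) $ i $ j)"
    by (intro arg_cong[where f=suminf] ext)
       (simp add: matrix_matrix_mult_def sum_distrib_left mult_ac)
  finally show ?thesis .
qed

definition phib :: "nat \<Rightarrow> complex^'n^'n \<Rightarrow> 'n \<Rightarrow> 'n \<Rightarrow> nat \<Rightarrow> complex" where
  "phib k Y i j n = (if n = 0 then 0 else (-1) ^ n * mpow Y (k * n - 1) $ i $ j)"

lemma phib_bound:
  fixes Y :: "complex^'n::finite^'n"
  shows "\<exists>R. \<forall>n. norm (phib k Y i j n) \<le> 1 * R ^ n"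
proof -
  define R where "R = (\<Sum>a\<in>UNIV. \<Sum>b\<in>UNIV. norm (Y $ a $ b))"
  have R0: "0 \<le> R" unfolding R_def by (intro sum_nonneg) auto
  have "norm (phib k Y i j n) \<le> 1 * ((R + 1) ^ k) ^ n" for n
  proof (cases "n = 0")
    case True then show ?thesis by (simp add: phib_def)
  next
    case False
    have "norm (phib k Y i j n) = norm (mpow Y (k * n - 1) $ i $ j)"
      using False by (simp add: phib_def norm_mult norm_power)
    also have "\<dots> \<le> R ^ (k * n - 1)" unfolding R_def by (rule mpow_bound)
    also have "\<dots> \<le> (R + 1) ^ (k * n - 1)" using R0 by (intro power_mono) auto
    also have "\<dots> \<le> (R + 1) ^ (k * n)" using R0 by (intro power_increasing) auto
    finally show ?thesis by (simp add: power_mult)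
  qed
  then show ?thesis by blast
qed

lemma phib_summ: "summable (\<lambda>n. phib k (Y::complex^'n::finite^'n) i j n * t ^ n / fact n)"
proof -
  obtain R where R: "\<forall>n. norm (phib k Y i j n) \<le> 1 * R ^ n" using phib_bound by blast
  show ?thesis by (rule ps_summable[of _ 1 R]) (use R in auto)
qed

lemma phib_Suc: "phib k Y i j (Suc m) * t ^ Suc m / fact (Suc m)
   = (- t) ^ Suc m / fact (Suc m) * mpow Y (k * Suc m - 1) $ i $ j"
proof -
  have "(- t) ^ Suc m = (-1) ^ Suc m * t ^ Suc m" by (rule power_minus)
  then show ?thesis unfolding phib_def by (simp only: Suc_not_Zero if_False) simp
qed

lemma phiser_summ: "summable (\<lambda>m. (- t) ^ Suc m / fact (Suc m) * mpow (Y::complex^'n::finite^'n) (k * Suc m - 1) $ i $ j)"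
proof -
  have "summable (\<lambda>m. phib k Y i j (Suc m) * t ^ Suc m / fact (Suc m))"
    using summable_Suc_iff[THEN iffD2, OF phib_summ[of k Y i j t]] by simp
  then show ?thesis by (simp only: phib_Suc)
qed

lemma phiser_ps: "phiser k t (Y::complex^'n::finite^'n) $ i $ j = (\<Sum>n. phib k Y i j n * t ^ n / fact n)"
proof -
  have "phiser k t Y $ i $ j = (\<Sum>m. (- t) ^ Suc m / fact (Suc m) * mpow Y (k * Suc m - 1) $ i $ j)"
    unfolding phiser_def by (rule ser_nth) (rule phiser_summ)
  also have "\<dots> = (\<Sum>m. phib k Y i j (Suc m) * t ^ Suc m / fact (Suc m))"
    by (simp only: phib_Suc)
  also have "\<dots> = (\<Sum>n. phib k Y i j n * t ^ n / fact n)"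
    by (subst suminf_split_head[OF phib_summ]) (simp add: phib_def)
  finally show ?thesis .
qed

lemma phiser_deriv: "((\<lambda>t. phiser k t (Y::complex^'n::finite^'n) $ i $ j) has_field_derivative
   (\<Sum>m. phib k Y i j (Suc m) * t ^ m / fact m)) (at t)"
proof -
  obtain R where R: "\<forall>n. norm (phib k Y i j n) \<le> 1 * R ^ n" using phib_bound by blast
  show ?thesis unfolding phiser_ps by (rule ps_deriv[of _ 1 R]) (use R in auto)
qed



lemma kd_mult: "kd a b * x = (if a = b then x else 0)" by (simp add: kd_def)
lemma mult_kd: "x * kd a b = (if a = b then x else 0)" by (simp add: kd_def)
lemma mult_if0: "x * (if c then y else 0) = (if c then x * y else (0::complex))" by simp
lemma if0_mult: "(if c then y else 0) * x = (if c then y * x else (0::complex))" by simp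

lemma sum_if_const: "(\<Sum>b\<in>S. if c then f b else (0::complex)) = (if c then \<Sum>b\<in>S. f b else 0)"
  by simp

lemma p1: "(\<Sum>a\<in>UNIV. \<Sum>b\<in>UNIV. (P::complex^'n::finite^'n)$b$a * (kd a j * kd i b)) = P$i$j"
  by (simp add: kd_mult mult_kd mult_if0 sum.delta sum.delta')

lemma p2: "(\<Sum>a\<in>UNIV. \<Sum>b\<in>UNIV. (P::complex^'n::finite^'n)$b$a * (M$a$j * kd i b)) = (P ** M)$i$j"
  by (simp add: kd_mult mult_kd mult_if0 sum.delta sum.delta' matrix_matrix_mult_def)

lemma p3: "(\<Sum>a\<in>UNIV. \<Sum>b\<in>UNIV. (P::complex^'n::finite^'n)$b$a * (kd a j * M$i$b)) = (M ** P)$i$j"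
  by (simp add: kd_mult mult_kd mult_if0 sum_if_const sum.delta sum.delta' matrix_matrix_mult_def mult.commute)

lemma p4: "(\<Sum>a\<in>UNIV. \<Sum>b\<in>UNIV. (P::complex^'n::finite^'n)$b$a * (U$a$j * X$i$b)) = (X ** (P ** U))$i$j"
  by (simp add: matrix_matrix_mult_def sum_distrib_left sum_distrib_right mult_ac)
     (rule sum.swap)

lemma p5: "(\<Sum>a\<in>UNIV. \<Sum>b\<in>UNIV. (P::complex^'n::finite^'n)$b$a * (X$a$j * U$i$b)) = ((U ** P) ** X)$i$j"
  by (simp add: matrix_matrix_mult_def sum_distrib_left sum_distrib_right mult_ac)

lemma lin5:
  fixes f1 f2 f3 f4 f5 :: "'a \<Rightarrow> 'b \<Rightarrow> complex"
  shows "(\<Sum>a\<in>A. \<Sum>b\<in>B. -(c0 * f1 a b + h * (f2 a b + f3 a b + f4 a b - f5 a b)))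
   = -(c0 * (\<Sum>a\<in>A. \<Sum>b\<in>B. f1 a b) + h * ((\<Sum>a\<in>A. \<Sum>b\<in>B. f2 a b) + (\<Sum>a\<in>A. \<Sum>b\<in>B. f3 a b)
       + (\<Sum>a\<in>A. \<Sum>b\<in>B. f4 a b) - (\<Sum>a\<in>A. \<Sum>b\<in>B. f5 a b)))"
  by (simp only: sum_negf sum.distrib sum_subtractf sum_distrib_left[symmetric])

lemma ham_CX:
  fixes X U :: "complex^'n::finite^'n"
  assumes "k \<ge> 1"
  shows "ham_trpow c0 k (X, U, V, W) (CX i j) = - (X ** mpow U k) $ i $ j - c0 * mpow U (k - 1) $ i $ j"
proof -
  define P where "P = mpow U (k - 1)"
  have PU: "P ** U = mpow U k" "U ** P = mpow U k"
  proof -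
    obtain k' where k: "k = Suc k'" using assms by (cases k) auto
    show "U ** P = mpow U k" by (simp add: P_def k)
    then show "P ** U = mpow U k" by (simp add: P_def mpow_comm)
  qed
  have "ham_trpow c0 k (X, U, V, W) (CX i j) = (\<Sum>a\<in>UNIV. \<Sum>b\<in>UNIV. P $ b $ a * (- brXU c0 X U i j a b))"
    by (simp add: ham_trpow_def P_def)
  also have "\<dots> = (\<Sum>a\<in>UNIV. \<Sum>b\<in>UNIV. -(c0 * (P$b$a * (kd a j * kd i b)) + 1/2 * (P$b$a * ((U ** X)$a$j * kd i b)
        + P$b$a * (kd a j * (X ** U)$i$b) + P$b$a * (U$a$j * X$i$b) - P$b$a * (X$a$j * U$i$b))))"
    by (intro sum.cong refl) (simp add: brXU_def algebra_simps)
  also have "\<dots> = -(c0 * P$i$j + 1/2 * ((P ** (U ** X))$i$j + ((X ** U) ** P)$i$j + (X ** (P ** U))$i$j - (U ** (P ** X))$i$j))"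
    by (simp only: lin5 p1 p2 p3 p4 p5)
  also have "\<dots> = - (X ** mpow U k) $ i $ j - c0 * mpow U (k - 1) $ i $ j"
  proof -
    have "P ** (U ** X) = mpow U k ** X" by (simp add: matrix_mul_assoc PU)
    moreover have "(X ** U) ** P = X ** mpow U k" by (simp add: PU flip: matrix_mul_assoc)
    moreover have "U ** (P ** X) = mpow U k ** X" by (simp add: matrix_mul_assoc PU)
    ultimately show ?thesis by (simp add: PU algebra_simps) (simp add: P_def)
  qed
  finally show ?thesis .
qed

lemma lin2:
  fixes f g :: "'a \<Rightarrow> 'b \<Rightarrow> complex"
  shows "(\<Sum>a\<in>A. \<Sum>b\<in>B. h * (f a b - g a b)) = h * ((\<Sum>a\<in>A. \<Sum>b\<in>B. f a b) - (\<Sum>a\<in>A. \<Sum>b\<in>B. g a b))"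
  by (simp only: sum_subtractf sum_distrib_left[symmetric])

lemma P_comm:
  assumes "k \<ge> 1"
  shows "mpow U (k - 1) ** U = mpow U k" "U ** mpow U (k - 1) = mpow U k"
proof -
  obtain k' where k: "k = Suc k'" using assms by (cases k) auto
  show "U ** mpow U (k - 1) = mpow U k" by (simp add: k)
  then show "mpow U (k - 1) ** U = mpow U k" by (simp add: mpow_comm)
qed

lemma ham_CU:
  fixes X U :: "complex^'n::finite^'n"
  shows "ham_trpow c0 k (X, U, V, W) (CU i j) = 0"
proof -
  define P where "P = mpow U (k - 1)"
  have "ham_trpow c0 k (X, U, V, W) (CU i j)
     = (\<Sum>a\<in>UNIV. \<Sum>b\<in>UNIV. 1/2 * (P$b$a * ((U ** U)$a$j * kd i b) - P$b$a * (kd a j * (U ** U)$i$b)))"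
    by (simp add: ham_trpow_def P_def algebra_simps)
  also have "\<dots> = 1/2 * ((P ** (U ** U))$i$j - ((U ** U) ** P)$i$j)"
    by (simp only: lin2 p2 p3)
  also have "\<dots> = 0"
    using comm_mpow[of "U ** U" U "k - 1"] by (simp add: P_def matrix_mul_assoc)
  finally show ?thesis .
qed

lemma p6: "(\<Sum>a\<in>UNIV. \<Sum>b\<in>UNIV. (P::complex^'n::finite^'n)$b$a * (kd c b * y$a)) = (P *v y)$c"
  by (simp add: kd_mult mult_kd mult_if0 sum_if_const sum.delta sum.delta' matrix_vector_mult_def)

lemma p7: "(\<Sum>a\<in>UNIV. \<Sum>b\<in>UNIV. (P::complex^'n::finite^'n)$b$a * (U$c$b * w$a)) = ((U ** P) *v w)$c"
  by (simp add: matrix_vector_mult_def matrix_matrix_mult_def sum_distrib_left sum_distrib_right mult_ac)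

lemma p8: "(\<Sum>a\<in>UNIV. \<Sum>b\<in>UNIV. (P::complex^'n::finite^'n)$b$a * (y$b * kd a l)) = (y v* P)$l"
  by (simp add: kd_mult mult_kd mult_if0 sum_if_const sum.delta sum.delta' vector_matrix_mult_def mult.commute)

lemma p9: "(\<Sum>a\<in>UNIV. \<Sum>b\<in>UNIV. (P::complex^'n::finite^'n)$b$a * (v$b * U$a$l)) = (v v* (P ** U))$l"
  by (simp add: vector_matrix_mult_def matrix_matrix_mult_def sum_distrib_left sum_distrib_right mult_ac)
     (rule sum.swap)

lemma ham_CW:
  fixes X U :: "complex^'n::finite^'n"
  assumes "k \<ge> 1"
  shows "ham_trpow c0 k (X, U, V, W) (CW a c) = 0"
proof -
  define P where "P = mpow U (k - 1)"
  have "ham_trpow c0 k (X, U, V, W) (CW a c)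
     = (\<Sum>a'\<in>UNIV. \<Sum>b\<in>UNIV. 1/2 * (P$b$a' * (kd c b * (U *v W a)$a') - P$b$a' * (U$c$b * W a $a')))"
    by (simp add: ham_trpow_def P_def brMW_def algebra_simps)
  also have "\<dots> = 1/2 * ((P *v (U *v W a))$c - ((U ** P) *v W a)$c)"
    by (simp only: lin2 p6 p7)
  also have "\<dots> = 0"
    by (simp add: matrix_vector_mul_assoc P_def mpow_comm)
  finally show ?thesis .
qed

lemma ham_CV:
  fixes X U :: "complex^'n::finite^'n"
  assumes "k \<ge> 1"
  shows "ham_trpow c0 k (X, U, V, W) (CV a l) = 0"
proof -
  define P where "P = mpow U (k - 1)"
  have "ham_trpow c0 k (X, U, V, W) (CV a l)
     = (\<Sum>a'\<in>UNIV. \<Sum>b\<in>UNIV. 1/2 * (P$b$a' * ((V a v* U)$b * kd a' l) - P$b$a' * (V a $b * U$a'$l)))"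
    by (simp add: ham_trpow_def P_def brMV_def algebra_simps)
  also have "\<dots> = 1/2 * (((V a v* U) v* P)$l - (V a v* (P ** U))$l)"
    by (simp only: lin2 p8 p9)
  also have "\<dots> = 0"
    by (simp add: vector_matrix_mul_assoc P_def mpow_comm)
  finally show ?thesis .
qed



lemma madd_rdistrib: "(B + C) ** (A::'a::comm_ring_1^'n^'n) = B ** A + C ** A"
  by (simp add: vec_eq_iff matrix_matrix_mult_def sum.distrib ring_distribs)

lemma matrix_neg_rmul: "A ** (- B) = - (A ** (B::'a::comm_ring_1^'n^'n))"
  by (simp add: vec_eq_iff matrix_matrix_mult_def sum_negf)

lemma minv_unique:
  fixes A :: "complex^'n::finite^'n"
  assumes "A ** B = mat 1"
  shows "matrix_inv A = B" "invertible A"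
proof -
  have BA: "B ** A = mat 1" using assms matrix_left_right_inverse by blast
  show inv: "invertible A" unfolding invertible_def using assms BA by blast
  have "A ** matrix_inv A = mat 1 \<and> matrix_inv A ** A = mat 1"
    unfolding matrix_inv_def by (rule someI_ex) (use inv in \<open>simp add: invertible_def\<close>)
  then have c: "matrix_inv A ** A = mat 1" by blast
  have "matrix_inv A = (matrix_inv A ** A) ** B"
    by (simp add: assms flip: matrix_mul_assoc)
  also have "\<dots> = B" by (simp add: c)
  finally show "matrix_inv A = B" .
qed

lemma mexp_pair:
  fixes C :: "complex^'n::finite^'n"
  shows "mexp (smul (- t) C) ** mexp (smul t C) = mat 1"
  using mexp_inv[of "- t" C] by simp

lemma inv_prodE:
  fixes M E E' :: "complex^'n::finite^'n"
  assumes "invertible M" "E ** E' = mat 1"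
  shows "invertible (M ** E)" "matrix_inv (M ** E) = E' ** matrix_inv M"
proof -
  have "M ** matrix_inv M = mat 1"
    using assms(1) minv_unique(1) unfolding invertible_def by metis
  then have "(M ** E) ** (E' ** matrix_inv M) = mat 1"
    using assms(2) by (metis matrix_mul_assoc matrix_mul_lid)
  then show "invertible (M ** E)" "matrix_inv (M ** E) = E' ** matrix_inv M"
    using minv_unique by blast+
qed

lemma smul_zero_mat: "smul 0 A = 0" by (simp add: vec_eq_iff)

lemma phiser_zero: "phiser k 0 Y = 0"
  by (simp add: phiser_def smul_zero_mat)

lemma mexp_zero': "mexp (smul (- 0) C) = mat 1"
  by (simp add: mexp_zero)

lemma kSuc: "k \<ge> 1 \<Longrightarrow> Suc (k * Suc m - 1) = k * Suc m" by (cases k) auto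

lemma phiY:
  fixes Y :: "complex^'n::finite^'n"
  assumes "k \<ge> 1"
  shows "phiser k t Y ** Y = mexp (smul (- t) (mpow Y k)) - mat 1"
    "Y ** phiser k t Y = mexp (smul (- t) (mpow Y k)) - mat 1"
proof -
  define e where "e i j m = mpow Y (k * m) $ i $ j * (- t) ^ m / fact m" for i j m
  have es: "summable (e i j)" for i j
    unfolding e_def using mexp_summ[of "mpow Y k" i j "- t"] by (simp add: mpow_mult)
  have E: "mexp (smul (- t) (mpow Y k)) $ i $ j = suminf (e i j)" for i j
    by (simp add: mexp_nth e_def[abs_def] mpow_mult)
  have YP: "Y ** mpow Y (k * Suc m - 1) = mpow Y (k * Suc m)" for m
    using kSuc[OF assms, of m] by (metis mpow.simps(2))
  have PY: "mpow Y (k * Suc m - 1) ** Y = mpow Y (k * Suc m)" for m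
    using YP[of m] mpow_comm[of Y] by metis
  have sh: "(\<Sum>m. (- t) ^ Suc m / fact (Suc m) * mpow Y (k * Suc m) $ i $ j) = suminf (e i j) - mat 1 $ i $ j" for i j
  proof -
    have "(\<Sum>m. (- t) ^ Suc m / fact (Suc m) * mpow Y (k * Suc m) $ i $ j) = (\<Sum>m. e i j (Suc m))"
      by (simp add: e_def mult_ac)
    also have "\<dots> = suminf (e i j) - e i j 0" by (rule suminf_split_head[OF es])
    finally show ?thesis by (simp add: e_def)
  qed
  show "phiser k t Y ** Y = mexp (smul (- t) (mpow Y k)) - mat 1"
    unfolding vec_eq_iff
  proof (intro allI)
    fix i j
    have "(phiser k t Y ** Y) $ i $ j = (\<Sum>m. (- t) ^ Suc m / fact (Suc m) * (mpow Y (k * Suc m - 1) ** Y) $ i $ j)"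
      unfolding phiser_def by (rule ser_rmul) (rule phiser_summ)
    then show "(phiser k t Y ** Y) $ i $ j = (mexp (smul (- t) (mpow Y k)) - mat 1) $ i $ j"
      by (simp only: PY sh E vector_minus_component)
  qed
  show "Y ** phiser k t Y = mexp (smul (- t) (mpow Y k)) - mat 1"
    unfolding vec_eq_iff
  proof (intro allI)
    fix i j
    have "(Y ** phiser k t Y) $ i $ j = (\<Sum>m. (- t) ^ Suc m / fact (Suc m) * (Y ** mpow Y (k * Suc m - 1)) $ i $ j)"
      unfolding phiser_def by (rule ser_lmul) (rule phiser_summ)
    then show "(Y ** phiser k t Y) $ i $ j = (mexp (smul (- t) (mpow Y k)) - mat 1) $ i $ j"
      by (simp only: YP sh E vector_minus_component)
  qed
qed



lemma dXE:
  fixes X C :: "complex^'n::finite^'n"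
  shows "((\<lambda>s. (X ** mexp (smul (- s) C)) $ i $ j) has_field_derivative
      (- (X ** mexp (smul (- t) C) ** C)) $ i $ j) (at t)"
proof -
  define C' where "C' = smul (-1) C"
  have sC: "smul (- s) C = smul s C'" for s unfolding C'_def by (rule smul_neg_s)
  have f: "(\<lambda>s. (X ** mexp (smul (- s) C)) $ i $ j) = (\<lambda>s. \<Sum>l\<in>UNIV. X $ i $ l * mexp (smul s C') $ l $ j)"
    by (rule ext) (simp add: sC matrix_matrix_mult_def)
  have d: "((\<lambda>s. \<Sum>l\<in>UNIV. X $ i $ l * mexp (smul s C') $ l $ j) has_field_derivative
       (\<Sum>l\<in>UNIV. X $ i $ l * (C' ** mexp (smul t C')) $ l $ j)) (at t)"
    by (intro DERIV_sum DERIV_cmult mexp_deriv)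
  have "C' ** mexp (smul t C') = - (mexp (smul (- t) C) ** C)"
  proof -
    have a: "C' ** mexp (smul (- t) C) = - (C ** mexp (smul (- t) C))"
      unfolding C'_def by (rule smul_neg_lmul)
    have "C' ** mexp (smul t C') = - (C ** mexp (smul (- t) C))"
      using a by (simp only: sC)
    also have "C ** mexp (smul (- t) C) = mexp (smul (- t) C) ** C"
      by (rule mexp_comm) simp
    finally show ?thesis .
  qed
  then have "(\<Sum>l\<in>UNIV. X $ i $ l * (C' ** mexp (smul t C')) $ l $ j)
      = (- (X ** mexp (smul (- t) C) ** C)) $ i $ j"
    by (simp add: matrix_neg_rmul[symmetric] matrix_mul_assoc[symmetric])
       (simp add: matrix_matrix_mult_def)
  with d f show ?thesis by simp
qed

lemma phiD:
  fixes Y :: "complex^'n::finite^'n"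
  assumes "k \<ge> 1"
  shows "(\<Sum>m. phib k Y i j (Suc m) * t ^ m / fact m)
     = - (phiser k t Y ** mpow Y k) $ i $ j - mpow Y (k - 1) $ i $ j"
proof -
  define D where "D m = phib k Y i j (Suc m) * t ^ m / fact m" for m
  obtain R where R: "\<forall>n. norm (phib k Y i j n) \<le> 1 * R ^ n" using phib_bound by blast
  have Ds: "summable D" unfolding D_def
    by (rule ps_summable[of _ R R]) (use R in \<open>metis mult_1 power_Suc\<close>)
  have DSs: "summable (\<lambda>m. D (Suc m))" using Ds summable_Suc_iff by blast
  have tm: "(- t) ^ Suc m / fact (Suc m) * (mpow Y (k * Suc m - 1) ** mpow Y k) $ i $ j = - D (Suc m)" for m
  proof -
    have "mpow Y (k * Suc m - 1) ** mpow Y k = mpow Y (k * Suc (Suc m) - 1)"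
    proof -
      have "k * Suc (Suc m) - 1 = (k * Suc m - 1) + k" using assms by (cases k) auto
      then show ?thesis by (simp only: mpow_add)
    qed
    moreover have "(- t) ^ Suc m = (-1) ^ Suc m * t ^ Suc m" by (rule power_minus)
    moreover have "(- t) ^ m = (-1) ^ m * t ^ m" by (rule power_minus)
    ultimately show ?thesis by (simp add: D_def phib_def)
  qed
  have "(phiser k t Y ** mpow Y k) $ i $ j
      = (\<Sum>m. (- t) ^ Suc m / fact (Suc m) * (mpow Y (k * Suc m - 1) ** mpow Y k) $ i $ j)"
    unfolding phiser_def by (rule ser_rmul) (rule phiser_summ)
  also have "\<dots> = (\<Sum>m. - D (Suc m))" by (simp only: tm)
  also have "\<dots> = - (suminf D - D 0)" by (simp add: suminf_minus[OF DSs] suminf_split_head[OF Ds])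
  finally have "(phiser k t Y ** mpow Y k) $ i $ j = - (suminf D - D 0)" .
  moreover have "D 0 = - mpow Y (k - 1) $ i $ j" by (simp add: D_def phib_def)
  ultimately show ?thesis by (simp add: D_def[abs_def])
qed



lemma EZ_comm: "Z ** mexp (smul s (mpow Z k)) = mexp (smul s (mpow Z k)) ** (Z::complex^'n::finite^'n)"
  by (rule mexp_comm) (rule comm_mpow, rule refl)

lemma part1:
  fixes X Z :: "complex^'n::finite^'n"
  assumes k: "k \<ge> 1" and mem: "(X, Z, V, W) \<in> MX d q"
  shows "let \<gamma> = (\<lambda>t::complex. (X ** mexp (smul (- t) (mpow Z k)), Z, V, W)) in
          \<gamma> 0 = (X, Z, V, W) \<and>
          (\<forall>t. \<gamma> t \<in> MX d q) \<and>
          (\<forall>t c. valid_coord d c \<longrightarrow>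
             ((\<lambda>s. cval (\<gamma> s) c) has_field_derivative ham_trpow 0 k (\<gamma> t) c) (at t))"
proof -
  have g0: "X ** mexp (smul (- 0) (mpow Z k)) = X" by (simp add: mexp_zero)
  have memt: "(X ** mexp (smul (- t) (mpow Z k)), Z, V, W) \<in> MX d q" for t
  proof -
    define E where "E = mexp (smul (- t) (mpow Z k))"
    define E' where "E' = mexp (smul t (mpow Z k))"
    have EE: "E ** E' = mat 1" unfolding E_def E'_def by (rule mexp_pair)
    from mem have iX: "invertible X" and iZ: "invertible Z"
      and iW: "\<forall>\<alpha><d. invertible (mat 1 + outer (W \<alpha>) (V \<alpha>))"
      and eq: "X ** Z ** matrix_inv X ** matrix_inv Z ** prodinv d W V = mat q"
      by (auto simp: MX_def)
    have i1: "invertible (X ** E)" and i2: "matrix_inv (X ** E) = E' ** matrix_inv X"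
      using inv_prodE[OF iX EE] by auto
    have EZ: "E ** Z = Z ** E" unfolding E_def by (rule EZ_comm[symmetric])
    have h: "(X ** E) ** Z = (X ** Z) ** E" by (metis EZ matrix_mul_assoc)
    have "(X ** E) ** Z ** (E' ** matrix_inv X) = (X ** Z) ** ((E ** E') ** matrix_inv X)"
      by (simp add: h matrix_mul_assoc)
    then have key: "(X ** E) ** Z ** matrix_inv (X ** E) = X ** Z ** matrix_inv X"
      by (simp add: EE i2)
    show ?thesis unfolding E_def[symmetric] MX_def
      using i1 iZ iW eq key by simp
  qed
  have der: "((\<lambda>s. cval (X ** mexp (smul (- s) (mpow Z k)), Z, V, W) c) has_field_derivative
      ham_trpow 0 k (X ** mexp (smul (- t) (mpow Z k)), Z, V, W) c) (at t)" for t c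
  proof (cases c)
    case (CX i j)
    then show ?thesis using dXE[of X "mpow Z k" i j t] by (simp add: ham_CX[OF k])
  next
    case (CU i j)
    then show ?thesis by (simp add: ham_CU)
  next
    case (CV a l)
    then show ?thesis by (simp add: ham_CV[OF k])
  next
    case (CW a l)
    then show ?thesis by (simp add: ham_CW[OF k])
  qed
  show ?thesis unfolding Let_def using g0 memt der by simp
qed

lemma part2:
  fixes X Y :: "complex^'n::finite^'n"
  assumes k: "k \<ge> 1" and mem: "(X, Y, V, W) \<in> MY d q"
  shows "let \<gamma> = (\<lambda>\<tau>::complex. (X ** mexp (smul (- \<tau>) (mpow Y k)) + phiser k \<tau> Y, Y, V, W)) in
          \<gamma> 0 = (X, Y, V, W) \<and>
          (\<forall>\<tau>. \<gamma> \<tau> \<in> MY d q) \<and>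
          (\<forall>\<tau> c. valid_coord d c \<longrightarrow>
             ((\<lambda>s. cval (\<gamma> s) c) has_field_derivative ham_trpow 1 k (\<gamma> \<tau>) c) (at \<tau>))"
proof -
  have g0: "X ** mexp (smul (- 0) (mpow Y k)) + phiser k 0 Y = X" by (simp add: mexp_zero phiser_zero)
  have memt: "(X ** mexp (smul (- t) (mpow Y k)) + phiser k t Y, Y, V, W) \<in> MY d q" for t
  proof -
    define E where "E = mexp (smul (- t) (mpow Y k))"
    define E' where "E' = mexp (smul t (mpow Y k))"
    define Xt where "Xt = X ** E + phiser k t Y"
    have EE: "E ** E' = mat 1" unfolding E_def E'_def by (rule mexp_pair)
    from mem have i1: "invertible (mat 1 + X ** Y)" and i2: "invertible (mat 1 + Y ** X)"
      and iW: "\<forall>\<alpha><d. invertible (mat 1 + outer (W \<alpha>) (V \<alpha>))"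
      and eq: "(mat 1 + X ** Y) ** matrix_inv (mat 1 + Y ** X) ** prodinv d W V = mat q"
      by (auto simp: MY_def)
    have EY: "E ** Y = Y ** E" unfolding E_def by (rule EZ_comm[symmetric])
    have pY: "phiser k t Y ** Y = E - mat 1" "Y ** phiser k t Y = E - mat 1"
      using phiY[OF k, where t=t and Y=Y] by (simp_all add: E_def)
    have h1: "mat 1 + Xt ** Y = (mat 1 + X ** Y) ** E"
    proof -
      have "(X ** E) ** Y = (X ** Y) ** E" by (metis EY matrix_mul_assoc)
      then show ?thesis unfolding Xt_def
        by (simp add: madd_rdistrib pY)
    qed
    have h2: "mat 1 + Y ** Xt = (mat 1 + Y ** X) ** E"
      unfolding Xt_def by (simp add: matrix_add_ldistrib madd_rdistrib pY matrix_mul_assoc)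
    have j1: "invertible (mat 1 + Xt ** Y)" unfolding h1 using inv_prodE[OF i1 EE] by simp
    have j2: "invertible (mat 1 + Y ** Xt)" and j2': "matrix_inv (mat 1 + Y ** Xt) = E' ** matrix_inv (mat 1 + Y ** X)"
      unfolding h2 using inv_prodE[OF i2 EE] by simp_all
    have "(mat 1 + Xt ** Y) ** matrix_inv (mat 1 + Y ** Xt)
        = (mat 1 + X ** Y) ** ((E ** E') ** matrix_inv (mat 1 + Y ** X))"
      by (simp only: h1 j2' matrix_mul_assoc)
    then have key: "(mat 1 + Xt ** Y) ** matrix_inv (mat 1 + Y ** Xt) = (mat 1 + X ** Y) ** matrix_inv (mat 1 + Y ** X)"
      by (simp add: EE)
    show ?thesis unfolding E_def[symmetric] Xt_def[symmetric] MY_def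
      using j1 j2 iW eq key by simp
  qed
  have der: "((\<lambda>s. cval (X ** mexp (smul (- s) (mpow Y k)) + phiser k s Y, Y, V, W) c) has_field_derivative
      ham_trpow 1 k (X ** mexp (smul (- t) (mpow Y k)) + phiser k t Y, Y, V, W) c) (at t)" for t c
  proof (cases c)
    case (CX i j)
    have d: "((\<lambda>s. (X ** mexp (smul (- s) (mpow Y k))) $ i $ j + phiser k s Y $ i $ j) has_field_derivative
        (- (X ** mexp (smul (- t) (mpow Y k)) ** mpow Y k)) $ i $ j + (\<Sum>m. phib k Y i j (Suc m) * t ^ m / fact m)) (at t)"
      by (intro DERIV_add dXE phiser_deriv)
    have e: "(- (X ** mexp (smul (- t) (mpow Y k)) ** mpow Y k)) $ i $ j + (\<Sum>m. phib k Y i j (Suc m) * t ^ m / fact m)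
       = ham_trpow 1 k (X ** mexp (smul (- t) (mpow Y k)) + phiser k t Y, Y, V, W) c"
      by (simp add: CX ham_CX[OF k] phiD[OF k] madd_rdistrib)
    show ?thesis using d unfolding e by (simp add: CX)
  next
    case (CU i j)
    then show ?thesis by (simp add: ham_CU)
  next
    case (CV a l)
    then show ?thesis by (simp add: ham_CV[OF k])
  next
    case (CW a l)
    then show ?thesis by (simp add: ham_CW[OF k])
  qed
  show ?thesis unfolding Let_def using g0 memt der by simp
qed


theorem mainTheorem14:
  fixes d k :: nat and q :: complex
  assumes "d \<ge> 1" and "q \<noteq> 0" and "\<forall>m::nat. m > 0 \<longrightarrow> q ^ m \<noteq> 1" and "k \<ge> 1"
  shows
    "(\<forall>(X::complex^'n::finite^'n) Z V W. (X, Z, V, W) \<in> MX d q \<longrightarrow>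
        (let \<gamma> = (\<lambda>t::complex. (X ** mexp (smul (- t) (mpow Z k)), Z, V, W)) in
          \<gamma> 0 = (X, Z, V, W) \<and>
          (\<forall>t. \<gamma> t \<in> MX d q) \<and>
          (\<forall>t c. valid_coord d c \<longrightarrow>
             ((\<lambda>s. cval (\<gamma> s) c) has_field_derivative ham_trpow 0 k (\<gamma> t) c) (at t))))
   \<and>
    (\<forall>(X::complex^'n::finite^'n) Y V W. (X, Y, V, W) \<in> MY d q \<longrightarrow>
        (let \<gamma> = (\<lambda>\<tau>::complex. (X ** mexp (smul (- \<tau>) (mpow Y k)) + phiser k \<tau> Y, Y, V, W)) in
          \<gamma> 0 = (X, Y, V, W) \<and>
          (\<forall>\<tau>. \<gamma> \<tau> \<in> MY d q) \<and>
          (\<forall>\<tau> c. valid_coord d c \<longrightarrow>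
             ((\<lambda>s. cval (\<gamma> s) c) has_field_derivative ham_trpow 1 k (\<gamma> \<tau>) c) (at \<tau>))))"
    using part1[OF assms(4)] part2[OF assms(4)] by blast

end
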